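(* Let $r\ge 1$ and let $m_1,\dots,m_r,n$ be positive integers with $m=\sum_{i=1}^r m_i\le n$. Let $$h=\max\Big\{k\in\mathbb{Z},\ k\ge 2:\ \frac{m_i n}{k-1}\ge \Big\lceil \frac{m_i n}{k}\Big\rceil \text{ for all } i\in[r]\Big\}.$$ Then $$\chi_{=}(K_{m_1,\dots,m_r}\times K_n)=\sum_{i=1}^r\Big\lceil \frac{m_i n}{h}\Big\rceil .$$
   Context: All graphs are finite, simple and undirected; $[k]=\{1,\dots,k\}$. A (proper) $k$-coloring of $G$ is a map $f:V(G)\to[k]$ with $f(x)\ne f(y)$ whenever $xy\in E(G)$; its color classes are the sets $f^{-1}(i)$. An equitable $k$-coloring is a $k$-coloring in which any two color classes differ in size by at most $1$ (equivalently each class has size $\lfloor |V(G)|/k\rfloor$ or $\lceil |V(G)|/k\rceil$); $G$ is equitably $k$-colorable if it has one. The equitable chromatic number $\chi_{=}(G)$ is the minimum $k$ such that $G$ is equitably $k$-colorable. $K_{m_1,\dots,m_r}$ denotes the complete multipartite graph with parts of sizes $m_1,\dots,m_r$, and $K_n$ the complete graph on $n$ vertices. The Kronecker product $G\times H$ has vertex set $V(G)\times V(H)$, with $(x,y)$ adjacent to $(x',y')$ iff $xx'\in E(G)$ and $yy'\in E(H)$. *)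

theory Defs
  imports Complex_Main
begin

text \<open>A finite simple graph is represented by a vertex set V and a symmetric,
irreflexive adjacency relation E (only its restriction to V matters).\<close>

definition proper_coloring :: "'a set \<Rightarrow> ('a \<Rightarrow> 'a \<Rightarrow> bool) \<Rightarrow> nat \<Rightarrow> ('a \<Rightarrow> nat) \<Rightarrow> bool" where
  "proper_coloring V E k f \<longleftrightarrow>
     (\<forall>x\<in>V. f x \<in> {1..k}) \<and> (\<forall>x\<in>V. \<forall>y\<in>V. E x y \<longrightarrow> f x \<noteq> f y)"

definition color_class :: "'a set \<Rightarrow> ('a \<Rightarrow> nat) \<Rightarrow> nat \<Rightarrow> 'a set" where
  "color_class V f i = {x\<in>V. f x = i}"

definition equitably_colorable :: "'a set \<Rightarrow> ('a \<Rightarrow> 'a \<Rightarrow> bool) \<Rightarrow> nat \<Rightarrow> bool" where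
  "equitably_colorable V E k \<longleftrightarrow>
     (\<exists>f. proper_coloring V E k f \<and>
        (\<forall>i\<in>{1..k}. \<forall>j\<in>{1..k}. card (color_class V f i) \<le> card (color_class V f j) + 1))"

definition equitable_chromatic_number :: "'a set \<Rightarrow> ('a \<Rightarrow> 'a \<Rightarrow> bool) \<Rightarrow> nat" where
  "equitable_chromatic_number V E = (LEAST k. equitably_colorable V E k)"

text \<open>Complete multipartite graph K_{m_1,...,m_r}, parts indexed 0..r-1 where
ms = [m_1,...,m_r]; vertex (i,j) is the j-th vertex of part i.\<close>

definition cmp_verts :: "nat list \<Rightarrow> (nat \<times> nat) set" where
  "cmp_verts ms = {(i, j). i < length ms \<and> j < ms ! i}"

definition cmp_adj :: "(nat \<times> nat) \<Rightarrow> (nat \<times> nat) \<Rightarrow> bool" where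
  "cmp_adj u v \<longleftrightarrow> fst u \<noteq> fst v"

definition complete_verts :: "nat \<Rightarrow> nat set" where
  "complete_verts n = {0..<n}"

definition complete_adj :: "nat \<Rightarrow> nat \<Rightarrow> bool" where
  "complete_adj x y \<longleftrightarrow> x \<noteq> y"

definition kron_verts :: "'a set \<Rightarrow> 'b set \<Rightarrow> ('a \<times> 'b) set" where
  "kron_verts V W = V \<times> W"

definition kron_adj :: "('a \<Rightarrow> 'a \<Rightarrow> bool) \<Rightarrow> ('b \<Rightarrow> 'b \<Rightarrow> bool) \<Rightarrow> ('a \<times> 'b) \<Rightarrow> ('a \<times> 'b) \<Rightarrow> bool" where
  "kron_adj E F u v \<longleftrightarrow> E (fst u) (fst v) \<and> F (snd u) (snd v)"

end

theory Submission imports Defs begin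
definition cd :: "nat \<Rightarrow> nat \<Rightarrow> nat" where
  "cd N t = nat \<lceil>real N / real t\<rceil>"

lemma cd_ge: "t > 0 \<Longrightarrow> N \<le> cd N t * t"
proof -
  assume t: "t > 0"
  have "real N / real t \<le> real_of_int \<lceil>real N / real t\<rceil>" by (rule le_of_int_ceiling)
  moreover have "real t > 0" using t by simp
  ultimately have "real N \<le> real_of_int \<lceil>real N / real t\<rceil> * real t" by (metis pos_divide_le_eq)
  moreover have "\<lceil>real N / real t\<rceil> \<ge> 0" 
    by (rule order.trans[OF _ ceiling_mono[of 0]]) (auto intro: divide_nonneg_nonneg)
  ultimately have "real N \<le> real (cd N t) * real t" unfolding cd_def by simp
  thus ?thesis by (metis of_nat_le_iff of_nat_mult)
qed

lemma cd_le: "t > 0 \<Longrightarrow> N \<le> d * t \<Longrightarrow> cd N t \<le> d"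
proof -
  assume t: "t > 0" and h: "N \<le> d * t"
  have "real N \<le> real d * real t" using h by (metis of_nat_le_iff of_nat_mult)
  hence "real N / real t \<le> real d" using t pos_divide_le_eq[of "real t" "real N"] by simp
  hence "\<lceil>real N / real t\<rceil> \<le> int d" by (metis ceiling_le of_int_of_nat_eq)
  thus ?thesis unfolding cd_def by (metis nat_le_iff)
qed

lemma cd_pos: "t > 0 \<Longrightarrow> N > 0 \<Longrightarrow> cd N t > 0"
  using cd_ge[of t N] by (cases "cd N t") auto

lemma cond_iff: "k \<ge> 2 \<Longrightarrow>
  (real N / (real k - 1) \<ge> real_of_int \<lceil>real N / real k\<rceil>) \<longleftrightarrow> (k - 1) * cd N k \<le> N"
proof -
  assume k: "k \<ge> 2"
  have pos: "real k - 1 > 0" using k by simp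
  have e: "real_of_int \<lceil>real N / real k\<rceil> = real (cd N k)" unfolding cd_def
    by (simp add: divide_nonneg_nonneg)
  have rk: "real k - 1 = real (k - 1)" using k by simp
  have "(real N / (real k - 1) \<ge> real (cd N k)) \<longleftrightarrow> real (cd N k) * (real k - 1) \<le> real N"
    using pos by (simp add: le_divide_eq)
  also have "\<dots> \<longleftrightarrow> (k - 1) * cd N k \<le> N" unfolding rk
    by (metis of_nat_le_iff of_nat_mult mult.commute)
  finally show ?thesis unfolding e .
qed

lemma ar1: "(m::nat) * n \<le> k * (s + 1) \<Longrightarrow> s \<le> m \<Longrightarrow> m \<le> n \<Longrightarrow> 0 < n \<Longrightarrow> m \<le> k"
proof (cases "s + 1 \<le> n")
  case True
  assume a: "m * n \<le> k * (s + 1)" "0 < n"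
  have "k * (s+1) \<le> k * n" using True by (intro mult_left_mono) auto
  hence "m * n \<le> k * n" using a by linarith
  thus ?thesis using a by simp
next
  case False
  assume a: "m * n \<le> k * (s + 1)" "s \<le> m" "m \<le> n" "0 < n"
  hence e: "s = n" "m = n" using False by auto
  show ?thesis
  proof (rule ccontr)
    assume "\<not> m \<le> k"
    hence "k + 1 \<le> n" using e by simp
    hence "k * (n+1) \<le> (n - 1) * (n + 1)" by (intro mult_right_mono) auto
    also have "(n - 1) * (n + 1) < n * n" using a(4)
      by (cases n) (auto simp: algebra_simps)
    finally show False using a e by simp
  qed
qed

lemma ar2: "j < (m::nat) \<Longrightarrow> a < n \<Longrightarrow> j * n + a < m * n"
proof -
  assume "j < m" "a < n"
  hence "j * n + a < j * n + n" by simp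
  also have "\<dots> = (j + 1) * n" by simp
  also have "\<dots> \<le> m * n" using \<open>j < m\<close> by (intro mult_right_mono) auto
  finally show ?thesis .
qed
theorem theorem3p1:
  fixes ms :: "nat list" and n h :: nat
  assumes "length ms \<ge> 1"
    and "\<forall>i<length ms. ms ! i > 0"
    and "n > 0"
    and "sum_list ms \<le> n"
    and "h = (GREATEST k. k \<ge> 2 \<and>
               (\<forall>i<length ms. real (ms ! i * n) / (real k - 1) \<ge> real_of_int \<lceil>real (ms ! i * n) / real k\<rceil>))"
  shows "equitable_chromatic_number (kron_verts (cmp_verts ms) (complete_verts n))
                                    (kron_adj cmp_adj complete_adj)
         = (\<Sum>i<length ms. nat \<lceil>real (ms ! i * n) / real h\<rceil>)"
proof -
  define V where "V = kron_verts (cmp_verts ms) (complete_verts n)"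
  define E where "E = kron_adj cmp_adj complete_adj"
  define N where "N i = ms ! i * n" for i
  define K where "K = (\<Sum>i<length ms. cd (N i) h)"
  define m where "m = sum_list ms"
  have KK: "(\<Sum>i<length ms. nat \<lceil>real (ms ! i * n) / real h\<rceil>) = K"
    unfolding K_def N_def cd_def by simp
  define Q where "Q k = (k \<ge> 2 \<and> (\<forall>i<length ms. (k-1) * cd (N i) k \<le> N i))" for k
  have QQ: "(\<lambda>k. k \<ge> 2 \<and>
               (\<forall>i<length ms. real (ms ! i * n) / (real k - 1) \<ge> real_of_int \<lceil>real (ms ! i * n) / real k\<rceil>)) = Q"
  proof
    fix k show "(k \<ge> 2 \<and>
               (\<forall>i<length ms. real (ms ! i * n) / (real k - 1) \<ge> real_of_int \<lceil>real (ms ! i * n) / real k\<rceil>)) = Q k"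
      unfolding Q_def N_def using cond_iff by blast
  qed
  have hQ: "h = Greatest Q" using assms(5) unfolding QQ .
  have Npos: "N i > 0" if "i < length ms" for i
    using assms(2,3) that unfolding N_def by simp
  have Q2: "Q 2" unfolding Q_def using cd_le[of 2 "N i" "N i" for i] by auto
  have Qb: "k \<le> N 0 + 1" if "Q k" for k
  proof -
    have l0: "0 < length ms" using assms(1) by linarith
    have "(k-1) * cd (N 0) k \<le> N 0" using that l0 unfolding Q_def by blast
    moreover have "cd (N 0) k > 0" using cd_pos[of k "N 0"] Npos[OF l0] that unfolding Q_def by simp
    ultimately have "k - 1 \<le> N 0"
    proof -
      have "(k-1) * 1 \<le> (k-1) * cd (N 0) k" using \<open>cd (N 0) k > 0\<close> by (intro mult_left_mono) auto
      thus ?thesis using \<open>(k-1) * cd (N 0) k \<le> N 0\<close> by linarith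
    qed
    thus ?thesis by simp
  qed
  have Qh: "Q h" unfolding hQ using Q2 Qb by (rule GreatestI_nat)
  have Qle: "k \<le> h" if "Q k" for k unfolding hQ using that Qb by (rule Greatest_le_nat)
  have h2: "h \<ge> 2" using Qh unfolding Q_def by simp
  have hn: "n \<le> h"
  proof (cases "n \<ge> 2")
    case True
    have "Q n" unfolding Q_def
    proof (intro conjI allI impI)
      fix i assume "i < length ms"
      have "cd (N i) n \<le> ms ! i" using cd_le[of n "N i" "ms ! i"] assms(3) unfolding N_def by simp
      hence "(n-1) * cd (N i) n \<le> (n-1) * ms ! i" by simp
      also have "\<dots> \<le> N i" unfolding N_def by simp
      finally show "(n-1) * cd (N i) n \<le> N i" .
    qed (use True in auto)
    thus ?thesis by (rule Qle)
  next
    case False thus ?thesis using h2 by simp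
  qed
  have memV: "x \<in> V \<longleftrightarrow> fst (fst x) < length ms \<and> snd (fst x) < ms ! fst (fst x) \<and> snd x < n" for x
    unfolding V_def kron_verts_def cmp_verts_def complete_verts_def by (cases x) auto
  have adj: "E x y \<longleftrightarrow> fst (fst x) \<noteq> fst (fst y) \<and> snd x \<noteq> snd y" for x y
    unfolding E_def kron_adj_def cmp_adj_def complete_adj_def by simp
  have cmpS: "cmp_verts ms = Sigma {..<length ms} (\<lambda>i. {..<ms ! i})"
    unfolding cmp_verts_def by auto
  have cardcmp: "card (cmp_verts ms) = m"
    unfolding cmpS m_def sum_list_sum_nth by (simp add: lessThan_atLeast0)
  have Vprod: "V = cmp_verts ms \<times> {0..<n}"
    unfolding V_def kron_verts_def complete_verts_def by simp
  have finV: "finite V" unfolding Vprod cmpS by simp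
  have cardV: "card V = m * n" unfolding Vprod using cardcmp
    by (simp add: card_cartesian_product)
  have upper: "equitably_colorable V E K"
  proof -
    define c where "c i = cd (N i) h" for i
    have cpos: "c i > 0" if "i < length ms" for i
      unfolding c_def using cd_pos[of h "N i"] Npos[OF that] h2 by simp
    have c_lo: "(h-1) * c i \<le> N i" if "i < length ms" for i
      using Qh that unfolding Q_def c_def by blast
    have c_hi: "N i \<le> c i * h" for i
      unfolding c_def using cd_ge[of h "N i"] h2 by simp
    define S where "S = Sigma {..<length ms} (\<lambda>i. {..<c i})"
    have cardS: "card S = K" unfolding S_def K_def c_def by simp
    obtain g where g: "bij_betw g S {1..K}"
      using finite_same_card_bij[of S "{1..K}"] cardS unfolding S_def by auto
    define pp where "pp x = snd (fst x) * n + snd x" for x :: "(nat \<times> nat) \<times> nat"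
    define f where "f x = g (fst (fst x), pp x mod c (fst (fst x)))" for x
    have inS: "(fst (fst x), pp x mod c (fst (fst x))) \<in> S" if "x \<in> V" for x
      using that cpos unfolding memV S_def by auto
    have pp_lt: "pp x < N (fst (fst x))" if "x \<in> V" for x
      using that ar2 unfolding memV pp_def N_def by auto
    have propc: "proper_coloring V E K f"
      unfolding proper_coloring_def
    proof (intro conjI ballI impI)
      fix x assume "x \<in> V"
      thus "f x \<in> {1..K}" unfolding f_def using inS g bij_betwE by blast
    next
      fix x y assume xy: "x \<in> V" "y \<in> V" "E x y"
      show "f x \<noteq> f y"
      proof
        assume "f x = f y"
        hence "(fst (fst x), pp x mod c (fst (fst x))) = (fst (fst y), pp y mod c (fst (fst y)))"
          unfolding f_def using g inS xy(1,2) unfolding bij_betw_def inj_on_def by blast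
        thus False using xy(3) adj by simp
      qed
    qed
    have bnd: "h - 1 \<le> card (color_class V f col) \<and> card (color_class V f col) \<le> h"
      if col: "col \<in> {1..K}" for col
    proof -
      obtain i r where ir: "(i, r) \<in> S" "g (i, r) = col"
      proof -
        have "col \<in> g ` S" using col g unfolding bij_betw_def by simp
        then obtain p where "p \<in> S" "g p = col" by blast
        thus ?thesis using that by (cases p) auto
      qed
      have il: "i < length ms" and rl: "r < c i" using ir(1) unfolding S_def by auto
      have cl: "color_class V f col = {x\<in>V. fst (fst x) = i \<and> pp x mod c i = r}"
      proof -
        have "f x = col \<longleftrightarrow> fst (fst x) = i \<and> pp x mod c i = r" if "x \<in> V" for x
        proof
          assume "f x = col"
          hence "g (fst (fst x), pp x mod c (fst (fst x))) = g (i, r)" using ir(2) unfolding f_def by simp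
          hence "(fst (fst x), pp x mod c (fst (fst x))) = (i, r)"
            using g inS[OF that] ir(1) unfolding bij_betw_def inj_on_def by blast
          thus "fst (fst x) = i \<and> pp x mod c i = r" by auto
        next
          assume "fst (fst x) = i \<and> pp x mod c i = r"
          thus "f x = col" unfolding f_def using ir(2) by auto
        qed
        thus ?thesis unfolding color_class_def by auto
      qed
      have finC: "finite (color_class V f col)" unfolding color_class_def using finV by simp
      have up: "card (color_class V f col) \<le> card {..<h}"
      proof (rule card_inj_on_le[where f = "\<lambda>x. pp x div c i"])
        show "inj_on (\<lambda>x. pp x div c i) (color_class V f col)"
        proof (rule inj_onI)
          fix x y assume x: "x \<in> color_class V f col" and y: "y \<in> color_class V f col"
            and e: "pp x div c i = pp y div c i"
          have xm: "x \<in> V" "fst (fst x) = i" "pp x mod c i = r" using x cl by auto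
          have ym: "y \<in> V" "fst (fst y) = i" "pp y mod c i = r" using y cl by auto
          have "pp x = pp y" using e xm(3) ym(3) by (metis div_mult_mod_eq)
          hence e2: "snd (fst x) * n + snd x = snd (fst y) * n + snd y" unfolding pp_def .
          have ax: "snd x < n" and ay: "snd y < n" using xm(1) ym(1) memV by auto
          have "(snd (fst x) * n + snd x) mod n = snd x" using ax by simp
          moreover have "(snd (fst y) * n + snd y) mod n = snd y" using ay by simp
          ultimately have s1: "snd x = snd y" using e2 by simp
          have "(snd (fst x) * n + snd x) div n = snd (fst x)" using ax by simp
          moreover have "(snd (fst y) * n + snd y) div n = snd (fst y)" using ay by simp
          ultimately have s2: "snd (fst x) = snd (fst y)" using e2 by simp
          show "x = y" using s1 s2 xm(2) ym(2) by (simp add: prod_eq_iff)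
        qed
      next
        show "(\<lambda>x. pp x div c i) ` color_class V f col \<subseteq> {..<h}"
        proof
          fix z assume "z \<in> (\<lambda>x. pp x div c i) ` color_class V f col"
          then obtain x where x: "x \<in> color_class V f col" "z = pp x div c i" by blast
          have xm: "x \<in> V" "fst (fst x) = i" using x cl by auto
          have "pp x < c i * h" using pp_lt[OF xm(1)] c_hi[of i] xm(2) by simp
          hence "pp x div c i < h" using cpos[OF il] by (simp add: div_less_iff_less_mult mult.commute)
          thus "z \<in> {..<h}" using x by simp
        qed
      qed simp
      have lo: "card {..<h-1} \<le> card (color_class V f col)"
      proof (rule card_inj_on_le[where f = "\<lambda>q. ((i, (q * c i + r) div n), (q * c i + r) mod n)"])
        show "inj_on (\<lambda>q. ((i, (q * c i + r) div n), (q * c i + r) mod n)) {..<h-1}"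
        proof (rule inj_onI)
          fix q q' assume "((i, (q * c i + r) div n), (q * c i + r) mod n) = ((i, (q' * c i + r) div n), (q' * c i + r) mod n)"
          hence "q * c i + r = q' * c i + r" by (metis div_mult_mod_eq prod.inject)
          thus "q = q'" using cpos[OF il] by simp
        qed
      next
        show "(\<lambda>q. ((i, (q * c i + r) div n), (q * c i + r) mod n)) ` {..<h-1} \<subseteq> color_class V f col"
        proof
          fix z assume "z \<in> (\<lambda>q. ((i, (q * c i + r) div n), (q * c i + r) mod n)) ` {..<h-1}"
          then obtain q where q: "q < h - 1" "z = ((i, (q * c i + r) div n), (q * c i + r) mod n)" by blast
          have "q * c i + r < (q + 1) * c i" using rl by simp
          also have "\<dots> \<le> (h - 1) * c i" using q(1) by (intro mult_right_mono) auto
          also have "\<dots> \<le> N i" using c_lo[OF il] .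
          finally have p: "q * c i + r < ms ! i * n" unfolding N_def .
          have "(q * c i + r) div n < ms ! i" using p assms(3) by (simp add: div_less_iff_less_mult)
          moreover have "(q * c i + r) mod n < n" using assms(3) by simp
          ultimately have zV: "z \<in> V" using il q(2) memV by simp
          have "pp z = q * c i + r" unfolding pp_def q(2) by simp
          hence "pp z mod c i = r" using rl by simp
          thus "z \<in> color_class V f col" using zV q(2) cl by simp
        qed
      qed (use finC in simp)
      show ?thesis using up lo by simp
    qed
    show ?thesis unfolding equitably_colorable_def
    proof (intro exI conjI ballI)
      show "proper_coloring V E K f" by (rule propc)
    next
      fix i j assume "i \<in> {1..K}" "j \<in> {1..K}"
      thus "card (color_class V f i) \<le> card (color_class V f j) + 1"
        using bnd[of i] bnd[of j] by linarith
    qed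
  qed
  have lower: "K \<le> k" if ec: "equitably_colorable V E k" for k
  proof -
    obtain f where pc: "proper_coloring V E k f"
      and eq: "\<forall>i\<in>{1..k}. \<forall>j\<in>{1..k}. card (color_class V f i) \<le> card (color_class V f j) + 1"
      using ec unfolding equitably_colorable_def by blast
    have fr: "f x \<in> {1..k}" if "x \<in> V" for x using pc that unfolding proper_coloring_def by blast
    have fp: "f x \<noteq> f y" if "x \<in> V" "y \<in> V" "E x y" for x y
      using pc that unfolding proper_coloring_def by blast
    define cls where "cls c = color_class V f c" for c
    have clsm: "x \<in> cls c \<longleftrightarrow> x \<in> V \<and> f x = c" for x c unfolding cls_def color_class_def by simp
    have fincls: "finite (cls c)" for c using finV unfolding cls_def color_class_def by simp
    have l0: "0 < length ms" using assms(1) by linarith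
    have v0: "((0, 0), 0) \<in> V" using memV l0 assms(2,3) by simp
    have k1: "1 \<le> k" using fr[OF v0] by simp
    have Vun: "V = (\<Union>c\<in>{1..k}. cls c)" using fr clsm by blast
    have sumcls: "(\<Sum>c\<in>{1..k}. card (cls c)) = m * n"
    proof -
      have "card (\<Union>c\<in>{1..k}. cls c) = (\<Sum>c\<in>{1..k}. card (cls c))"
        by (rule card_UN_disjoint) (auto simp: fincls clsm)
      thus ?thesis using Vun cardV by simp
    qed
    define s where "s = Min ((\<lambda>c. card (cls c)) ` {1..k})"
    have s_le: "s \<le> card (cls c)" if "c \<in> {1..k}" for c
      unfolding s_def using that by (intro Min_le) auto
    have "s \<in> (\<lambda>c. card (cls c)) ` {1..k}" unfolding s_def using k1 by (intro Min_in) auto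
    then obtain c0 where c0: "c0 \<in> {1..k}" "card (cls c0) = s" by blast
    have s_ge: "card (cls c) \<le> s + 1" if "c \<in> {1..k}" for c
      using eq that c0 unfolding cls_def by metis
    have tot: "m * n \<le> k * (s + 1)"
    proof -
      have "(\<Sum>c\<in>{1..k}. card (cls c)) \<le> (\<Sum>c\<in>{1..k}. s + 1)" using s_ge by (intro sum_mono) auto
      thus ?thesis using sumcls by simp
    qed
    have Km: "K \<le> m"
    proof -
      have "K \<le> (\<Sum>i<length ms. ms ! i)" unfolding K_def
      proof (rule sum_mono)
        fix i show "cd (N i) h \<le> ms ! i"
          using cd_le[of h "N i" "ms ! i"] h2 hn unfolding N_def by (simp add: mult_left_mono)
      qed
      thus ?thesis unfolding m_def sum_list_sum_nth by (simp add: lessThan_atLeast0)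
    qed
    show ?thesis
    proof (cases "\<exists>c\<in>{1..k}. \<exists>x\<in>cls c. \<exists>y\<in>cls c. fst (fst x) \<noteq> fst (fst y)")
      case True
      then obtain c x y where c: "c \<in> {1..k}" and x: "x \<in> cls c" and y: "y \<in> cls c"
        and d: "fst (fst x) \<noteq> fst (fst y)" by blast
      have sxy: "snd x = snd y"
        using fp[of x y] x y d adj clsm by auto
      have sub: "cls c \<subseteq> cmp_verts ms \<times> {snd x}"
      proof
        fix z assume z: "z \<in> cls c"
        have zV: "z \<in> V" using z clsm by simp
        have "snd z = snd x"
        proof (rule ccontr)
          assume ne: "snd z \<noteq> snd x"
          show False
          proof (cases "fst (fst z) = fst (fst x)")
            case True
            hence "E z y" using d ne sxy adj by simp
            thus False using fp[of z y] z y clsm by auto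
          next
            case False
            hence "E z x" using ne adj by simp
            thus False using fp[of z x] z x clsm by auto
          qed
        qed
        moreover have "fst z \<in> cmp_verts ms" using zV unfolding Vprod by auto
        ultimately show "z \<in> cmp_verts ms \<times> {snd x}" by (cases z) auto
      qed
      have "card (cls c) \<le> card (cmp_verts ms \<times> {snd x})"
        by (rule card_mono) (use sub in \<open>auto simp: cmpS\<close>)
      hence "card (cls c) \<le> m" using cardcmp by (simp add: card_cartesian_product)
      hence "s \<le> m" using s_le[OF c] by simp
      hence "m \<le> k" using ar1[OF tot] assms(3,4) unfolding m_def by simp
      thus ?thesis using Km by simp
    next
      case False
      hence pure: "\<And>c x y. c \<in> {1..k} \<Longrightarrow> x \<in> cls c \<Longrightarrow> y \<in> cls c \<Longrightarrow> fst (fst x) = fst (fst y)"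
        by blast
      define D where "D i = {c\<in>{1..k}. \<exists>x\<in>cls c. fst (fst x) = i}" for i
      have finD: "finite (D i)" for i unfolding D_def by simp
      have Ddisj: "D i \<inter> D j = {}" if "i \<noteq> j" for i j
        using pure that unfolding D_def by blast
      have sumD: "(\<Sum>i<length ms. card (D i)) \<le> k"
      proof -
        have "(\<Sum>i<length ms. card (D i)) = card (\<Union>i<length ms. D i)"
          by (rule card_UN_disjoint[symmetric]) (auto simp: finD Ddisj)
        also have "\<dots> \<le> card {1..k}" by (rule card_mono) (auto simp: D_def)
        finally show ?thesis by simp
      qed
      have NP: "N i = (\<Sum>c\<in>D i. card (cls c))" if il: "i < length ms" for i
      proof -
        have Pe: "{x\<in>V. fst (fst x) = i} = (\<Union>c\<in>D i. cls c)"
        proof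
          show "{x\<in>V. fst (fst x) = i} \<subseteq> (\<Union>c\<in>D i. cls c)"
          proof
            fix x assume "x \<in> {x\<in>V. fst (fst x) = i}"
            hence "x \<in> V" "fst (fst x) = i" by auto
            hence xi: "x \<in> V" "fst (fst x) = i" .
            have xc: "x \<in> cls (f x)" using xi clsm by simp
            have "f x \<in> D i" unfolding D_def using fr[OF xi(1)] xc xi(2) by blast
            note this xc
            thus "x \<in> (\<Union>c\<in>D i. cls c)" by blast
          qed
        next
          show "(\<Union>c\<in>D i. cls c) \<subseteq> {x\<in>V. fst (fst x) = i}"
          proof
            fix z assume "z \<in> (\<Union>c\<in>D i. cls c)"
            then obtain c where c: "c \<in> D i" "z \<in> cls c" by blast
            then obtain x where "c \<in> {1..k}" "x \<in> cls c" "fst (fst x) = i" unfolding D_def by blast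
            hence "fst (fst z) = i" using pure c(2) by metis
            thus "z \<in> {x\<in>V. fst (fst x) = i}" using c(2) clsm by simp
          qed
        qed
        have PP: "{x\<in>V. fst (fst x) = i} = ({i} \<times> {..<ms ! i}) \<times> {0..<n}"
          using il memV by auto
        have "N i = card {x\<in>V. fst (fst x) = i}" unfolding PP N_def
          by (simp add: card_cartesian_product)
        also have "\<dots> = (\<Sum>c\<in>D i. card (cls c))" unfolding Pe
          by (rule card_UN_disjoint) (auto simp: finD fincls clsm)
        finally show ?thesis .
      qed
      have Dsub: "D i \<subseteq> {1..k}" for i unfolding D_def by auto
      have Dne: "cls c \<noteq> {}" if "c \<in> D i" for c i using that unfolding D_def by auto
      have key: "cd (N i) h \<le> card (D i)" if il: "i < length ms" for i
      proof (cases "s = 0")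
        case True
        have "N i \<le> (\<Sum>c\<in>D i. 1)" unfolding NP[OF il]
          using s_ge Dsub True by (intro sum_mono) (metis One_nat_def add_0 subsetD)
        hence a1: "N i \<le> card (D i)" by simp
        have "card (D i) * 1 \<le> card (D i) * h" using h2 by (intro mult_left_mono) auto
        hence "N i \<le> card (D i) * h" using a1 by linarith
        thus ?thesis using cd_le h2 by simp
      next
        case False
        have bnds: "card (D j) * s \<le> N j \<and> N j \<le> card (D j) * (s + 1)" if jl: "j < length ms" for j
        proof
          have "(\<Sum>c\<in>D j. s) \<le> (\<Sum>c\<in>D j. card (cls c))" using s_le Dsub by (intro sum_mono) blast
          thus "card (D j) * s \<le> N j" using NP[OF jl] by simp
          have "(\<Sum>c\<in>D j. card (cls c)) \<le> (\<Sum>c\<in>D j. s + 1)" using s_ge Dsub by (intro sum_mono) blast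
          thus "N j \<le> card (D j) * (s + 1)" using NP[OF jl] by simp
        qed
        have "Q (s + 1)" unfolding Q_def
        proof (intro conjI allI impI)
          show "2 \<le> s + 1" using False by simp
        next
          fix j assume jl: "j < length ms"
          have "cd (N j) (s + 1) \<le> card (D j)" using cd_le[of "s+1" "N j" "card (D j)"] bnds[OF jl] by simp
          hence "s * cd (N j) (s + 1) \<le> s * card (D j)" by simp
          also have "\<dots> \<le> N j" using bnds[OF jl] by (simp add: mult.commute)
          finally show "(s + 1 - 1) * cd (N j) (s + 1) \<le> N j" by simp
        qed
        hence "s + 1 \<le> h" by (rule Qle)
        hence "card (D i) * (s + 1) \<le> card (D i) * h" by (rule mult_left_mono) simp
        hence "N i \<le> card (D i) * h" using bnds[OF il] by linarith
        thus ?thesis using cd_le h2 by simp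
      qed
      have "K \<le> (\<Sum>i<length ms. card (D i))" unfolding K_def using key by (intro sum_mono) auto
      thus ?thesis using sumD by linarith
    qed
  qed
  have "equitable_chromatic_number V E = K"
    unfolding equitable_chromatic_number_def
    by (rule Least_equality) (use upper lower in auto)
  thus ?thesis unfolding KK V_def E_def .
qed

end
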